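(* Let $n\ge1$ and let $F$ and $G$ be permutations of $\mathbb{F}_{2^n}$ such that $F(x)=G(x)$ for all $x\in\mathbb{F}_{2^n}\setminus P$, for some nonempty subset $P\subseteq\mathbb{F}_{2^n}$. If $c\in\mathbb{F}_{2^n}$ and $c\neq 1$, then ${}_c\Delta_F\le {}_c\Delta_G+\#P$.
   Context: For $F:\mathbb{F}_{2^n}\to\mathbb{F}_{2^n}$ and $c\in\mathbb{F}_{2^n}$, ${}_cD_aF(x)=F(x+a)+cF(x)$ (characteristic $2$). For $a,b\in\mathbb{F}_{2^n}$, ${}_c\Delta_F(a,b)$ is the number of $x\in\mathbb{F}_{2^n}$ with ${}_cD_aF(x)=b$, and the $c$-differential uniformity is ${}_c\Delta_F=\max\{{}_c\Delta_F(a,b): a,b\in\mathbb{F}_{2^n},\ a\neq 0 \text{ if } c=1\}$. $\#P$ denotes the cardinality of $P$. *)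

theory Defs
  imports Main
begin

text \<open>The finite field F_{2^n} is modelled by a finite field type 'a with CARD('a) = 2^n
  (characteristic 2 follows). The c-differential derivative, in characteristic 2:\<close>

definition cDeriv :: "'a::field \<Rightarrow> 'a \<Rightarrow> ('a \<Rightarrow> 'a) \<Rightarrow> 'a \<Rightarrow> 'a" where
  "cDeriv c a F x = F (x + a) + c * F x"

definition cDelta :: "'a::{field,finite} \<Rightarrow> ('a \<Rightarrow> 'a) \<Rightarrow> 'a \<Rightarrow> 'a \<Rightarrow> nat" where
  "cDelta c F a b = card {x. cDeriv c a F x = b}"

definition cDU :: "'a::{field,finite} \<Rightarrow> ('a \<Rightarrow> 'a) \<Rightarrow> nat" where
  "cDU c F = Max {cDelta c F a b | a b. a \<noteq> 0 \<or> c \<noteq> 1}"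

end

theory Submission
  imports Defs
begin

lemma card_times_zero:
  fixes g :: "'a::{field,finite}"
  shows "of_nat (card (UNIV :: 'a set)) * g = 0"
proof -
  have "(\<Sum>x\<in>UNIV. x + g) = (\<Sum>x\<in>UNIV. x)"
    by (rule sum.reindex_bij_betw[of "\<lambda>x. x + g" UNIV UNIV "\<lambda>x. x", simplified])
       (auto simp: bij_betw_def inj_on_def intro!: image_eqI[where x="_ - g"])
  then show ?thesis by (simp add: sum.distrib)
qed

lemma two_zero:
  assumes "n \<ge> 1" and "card (UNIV :: 'a::{field,finite} set) = 2 ^ n"
  shows "(2::'a) = 0"
proof -
  have "(of_nat (2^n) :: 'a) = 0" using card_times_zero[where g="1::'a"] assms(2) by simp
  then have "(2::'a)^n = 0" by simp
  then show ?thesis by simp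
qed

lemma pointwise:
  fixes F G :: "'a::{field,finite} \<Rightarrow> 'a" and P :: "'a set" and c :: 'a
  assumes two: "(2::'a) = 0" and "bij F"
    and "\<forall>x. x \<notin> P \<longrightarrow> F x = G x"
    and "c \<noteq> 1"
  shows "cDelta c F a b \<le> cDelta c G a b + card P"
proof -
  define SF where "SF = {x. cDeriv c a F x = b}"
  define SG where "SG = {x. cDeriv c a G x = b}"
  define Q where "Q = {x. x \<in> P \<or> x + a \<in> P}"
  have neg: "\<And>y::'a. - y = y"
  proof -
    fix y :: 'a have "y + y = 2 * y" by simp
    then have "y + y = 0" using two by simp
    then show "- y = y" by (metis add_eq_0_iff)
  qed
  have sub1: "SF - Q \<subseteq> SG"
    using assms(3) by (auto simp: SF_def SG_def Q_def cDeriv_def) (metis assms(3))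
  define f where "f x = (if x \<in> P then x else x + a)" for x
  have inj: "inj_on f (SF \<inter> Q)"
  proof (rule inj_onI)
    fix x y assume x: "x \<in> SF \<inter> Q" and y: "y \<in> SF \<inter> Q" and e: "f x = f y"
    have key: "x = y" if "x = y + a" "x \<in> SF" "y \<in> SF" for x y
    proof -
      have ya: "y = x + a" using that(1) neg by (metis add_diff_cancel diff_add_cancel add_uminus_conv_diff)
      have e1: "F y + c * F x = b" using that(2) ya by (simp add: SF_def cDeriv_def)
      have e2: "F x + c * F y = b" using that(3) that(1) by (simp add: SF_def cDeriv_def)
      have "(1 - c) * (F y - F x) = 0" using e1 e2 by (simp add: algebra_simps)
      then have "F y = F x" using assms(4) by simp
      then show ?thesis using \<open>bij F\<close> by (metis bij_def injD)
    qed
    show "x = y"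
      using e x y key[of x y] key[of y x] by (auto simp: f_def split: if_splits)
  qed
  have "f ` (SF \<inter> Q) \<subseteq> P" by (auto simp: f_def Q_def)
  then have c1: "card (SF \<inter> Q) \<le> card P"
    using inj by (metis card_inj_on_le finite)
  have "card SF \<le> card (SF - Q) + card (SF \<inter> Q)"
    by (metis Int_Diff_Un card_Un_le sup_commute)
  also have "card (SF - Q) \<le> card SG" using sub1 by (simp add: card_mono)
  finally show ?thesis using c1 by (simp add: cDelta_def SF_def SG_def)
qed

theorem mainTheorem2:
  fixes F G :: "'a::{field,finite} \<Rightarrow> 'a" and P :: "'a set" and c :: 'a and n :: nat
  assumes "n \<ge> 1" and "card (UNIV :: 'a set) = 2 ^ n"
    and "bij F" and "bij G"
    and "P \<noteq> {}"
    and "\<forall>x. x \<notin> P \<longrightarrow> F x = G x"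
    and "c \<noteq> 1"
  shows "cDU c F \<le> cDU c G + card P"
proof -
  have two: "(2::'a) = 0" using two_zero assms(1,2) by blast
  let ?A = "\<lambda>H. {cDelta c H a b | a b. a \<noteq> 0 \<or> c \<noteq> 1}"
  have fin: "finite (?A H)" for H
  proof -
    have "?A H = (\<lambda>(a,b). cDelta c H a b) ` UNIV" using assms(7) by auto
    then show ?thesis by simp
  qed
  have ne: "?A H \<noteq> {}" for H using assms(7) by auto
  obtain a b where ab: "cDU c F = cDelta c F a b" "a \<noteq> 0 \<or> c \<noteq> 1"
    using Max_in[OF fin ne, of F] unfolding cDU_def by auto
  have "cDelta c F a b \<le> cDelta c G a b + card P"
    using pointwise[OF two assms(3,6,7)] .
  also have "cDelta c G a b \<le> cDU c G"
    unfolding cDU_def using fin ab(2) by (auto intro!: Max_ge)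
  finally show ?thesis using ab(1) by simp
qed

end
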